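(* Let $\|\cdot\|$ be a norm on $\mathbb{R}^d$ and let $\mathbf{X}$ be a random vector in $\mathbb{R}^d$ such that (C1) for every $y>0$ the truncated distribution $\mathbb{P}(\mathbf{X}\in\cdot\mid\|\mathbf{X}\|\le y)$ is nondegenerate (no hyperplane $\mathcal{H}$ has $\mathbb{P}(\mathbf{X}\in\mathcal{H}\mid\|\mathbf{X}\|\le y)=1$), and (C2) the distribution of $\|\mathbf{X}\|$ is absolutely continuous and regularly varying at infinity with index $-\alpha$, $\alpha>0$. Suppose moreover $\alpha\in(2,3]$. Then there exist $C>0$ and $\delta>0$ with $\mathbb{P}(\|\mathbf{X}\|\le\delta)<1$ such that $$\|\Sigma(y)^{-1/2}\|\le C\quad\text{for all } y\ge\delta.$$
   Context: $\Sigma(y)$ is the covariance matrix of the truncated distribution $\mathbb{P}(\mathbf{X}\in\cdot\mid\|\mathbf{X}\|\le y)$, and $\|\Sigma(y)^{-1/2}\|$ is the operator norm of the inverse square root of this (positive definite) matrix. Regular variation of $\|\mathbf{X}\|$ with index $-\alpha$ means $\mathbb{P}(\|\mathbf{X}\|>tx)/\mathbb{P}(\|\mathbf{X}\|>t)\to x^{-\alpha}$ as $t\to\infty$ for every $x>0$. *)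

theory Defs
  imports "HOL-Probability.Probability"
begin

definition is_norm :: "(real^'d \<Rightarrow> real) \<Rightarrow> bool" where
  "is_norm N \<longleftrightarrow> (\<forall>x. N x = 0 \<longleftrightarrow> x = 0) \<and> (\<forall>x y. N (x + y) \<le> N x + N y)
     \<and> (\<forall>c x. N (c *\<^sub>R x) = \<bar>c\<bar> * N x)"

definition trunc_event :: "'a measure \<Rightarrow> ('a \<Rightarrow> real^'d) \<Rightarrow> (real^'d \<Rightarrow> real) \<Rightarrow> real \<Rightarrow> 'a set" where
  "trunc_event M X N y = {\<omega> \<in> space M. N (X \<omega>) \<le> y}"

definition cond_exp_event :: "'a measure \<Rightarrow> 'a set \<Rightarrow> ('a \<Rightarrow> real) \<Rightarrow> real" where
  "cond_exp_event M A f = (\<integral>\<omega>. indicator A \<omega> * f \<omega> \<partial>M) / measure M A"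

definition trunc_cov :: "'a measure \<Rightarrow> ('a \<Rightarrow> real^'d) \<Rightarrow> (real^'d \<Rightarrow> real) \<Rightarrow> real \<Rightarrow> real^'d^'d" where
  "trunc_cov M X N y = (\<chi> i j.
      let A = trunc_event M X N y in
      cond_exp_event M A (\<lambda>\<omega>. X \<omega> $ i * X \<omega> $ j)
      - cond_exp_event M A (\<lambda>\<omega>. X \<omega> $ i) * cond_exp_event M A (\<lambda>\<omega>. X \<omega> $ j))"

definition nondegenerate_trunc :: "'a measure \<Rightarrow> ('a \<Rightarrow> real^'d) \<Rightarrow> (real^'d \<Rightarrow> real) \<Rightarrow> real \<Rightarrow> bool" where
  "nondegenerate_trunc M X N y \<longleftrightarrow>
     measure M (trunc_event M X N y) > 0 \<and>
     (\<forall>a b. a \<noteq> 0 \<longrightarrow>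
        measure M {\<omega> \<in> trunc_event M X N y. a \<bullet> X \<omega> = b} < measure M (trunc_event M X N y))"

definition psd_sqrt :: "real^'n^'n \<Rightarrow> real^'n^'n" where
  "psd_sqrt A = (THE B. transpose B = B \<and> (\<forall>v. 0 \<le> v \<bullet> (B *v v)) \<and> B ** B = A)"

definition inv_sqrt_opnorm :: "real^'n^'n \<Rightarrow> real" where
  "inv_sqrt_opnorm S = onorm (\<lambda>v. psd_sqrt (matrix_inv S) *v v)"

definition regvar_tail :: "'a measure \<Rightarrow> ('a \<Rightarrow> real) \<Rightarrow> real \<Rightarrow> bool" where
  "regvar_tail M R \<alpha> \<longleftrightarrow> (\<forall>x>0.
     ((\<lambda>t. measure M {\<omega> \<in> space M. R \<omega> > t * x} / measure M {\<omega> \<in> space M. R \<omega> > t})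
        \<longlongrightarrow> x powr (-\<alpha>)) at_top)"

end

theory Submission
  imports Defs
begin
lemma vec_eq_by_inner:
  fixes a c :: "'a::real_inner"
  assumes "\<And>y. a \<bullet> y = c \<bullet> y" shows "a = c"
proof -
  have "(a - c) \<bullet> (a - c) = 0" using assms[of "a - c"] by (simp add: inner_diff_left)
  then show ?thesis by simp
qed

lemma ortho_coeff:
  fixes B :: "'a::real_inner set"
  assumes "finite B" "pairwise orthogonal B" "\<And>b. b \<in> B \<Longrightarrow> norm b = 1" "b \<in> B"
  shows "b \<bullet> (\<Sum>b'\<in>B. c b' *\<^sub>R b') = c b"
proof -
  have "b \<bullet> (\<Sum>b'\<in>B. c b' *\<^sub>R b') = (\<Sum>b'\<in>B. c b' * (b \<bullet> b'))"
    by (simp add: inner_sum_right)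
  also have "\<dots> = (\<Sum>b'\<in>B. if b' = b then c b else 0)"
  proof (rule sum.cong)
    fix b' assume b': "b' \<in> B"
    show "c b' * (b \<bullet> b') = (if b' = b then c b else 0)"
    proof (cases "b' = b")
      case True
      then have "b \<bullet> b' = 1" using assms(3)[OF assms(4)] by (simp add: dot_square_norm)
      then show ?thesis using True by simp
    next
      case False
      then have "orthogonal b b'" using pairwiseD[OF assms(2) assms(4) b'] by simp
      then have "b \<bullet> b' = 0" by (simp add: orthogonal_def)
      then show ?thesis using False by simp
    qed
  qed simp
  also have "\<dots> = c b" using assms(1,4) by simp
  finally show ?thesis .
qed

lemma sym_eigenbasis:
  fixes f :: "'a::euclidean_space \<Rightarrow> 'a"
  assumes lf: "linear f" and sym: "\<And>x y. f x \<bullet> y = x \<bullet> f y"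
  shows "subspace S \<Longrightarrow> f ` S \<subseteq> S \<Longrightarrow> \<exists>B. B \<subseteq> S \<and> finite B \<and> pairwise orthogonal B \<and>
     (\<forall>b\<in>B. norm b = 1 \<and> f b = (b \<bullet> f b) *\<^sub>R b) \<and> span B = S"
proof (induction "dim S" arbitrary: S rule: less_induct)
  case less
  show ?case
  proof (cases "S = {0}")
    case True then show ?thesis by (intro exI[of _ "{}"]) auto
  next
    case False
    then obtain z where z: "z \<in> S" "z \<noteq> 0" using less.prems subspace_0 by blast
    let ?K = "sphere 0 1 \<inter> S"
    have cK: "compact ?K" by (simp add: closed_subspace compact_Int_closed less.prems(1))
    have "z /\<^sub>R norm z \<in> ?K" using z less.prems(1) by (simp add: subspace_scale)
    then have neK: "?K \<noteq> {}" by blast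
    have blf: "bounded_linear f" using lf linear_conv_bounded_linear by blast
    have "continuous_on UNIV f" using blf linear_continuous_on by blast
    then have "continuous_on ?K (\<lambda>x. x \<bullet> f x)"
      by (intro continuous_intros) (auto intro: continuous_on_subset)
    then obtain u where u: "u \<in> ?K" "\<And>y. y \<in> ?K \<Longrightarrow> y \<bullet> f y \<le> u \<bullet> f u"
      using continuous_attains_sup[OF cK neK] by blast
    define l where "l = u \<bullet> f u"
    have uS: "u \<in> S" and nu: "norm u = 1" using u(1) by auto
    have uu: "u \<bullet> u = 1" using nu by (simp add: dot_square_norm)
    have key: "w \<bullet> f u = 0" if w: "w \<in> S" "w \<bullet> u = 0" for w
    proof -
      define a where "a = w \<bullet> f u"
      define b where "b = w \<bullet> f w - l * (w \<bullet> w)"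
      have ineq: "2*t*a + t^2 * b \<le> 0" for t
      proof -
        define v where "v = u + t *\<^sub>R w"
        have vv: "v \<bullet> v = 1 + t^2 * (w \<bullet> w)"
          using uu w(2) by (simp add: v_def inner_add_left inner_add_right inner_commute power2_eq_square)
        have vpos: "v \<bullet> v > 0" unfolding vv by (simp add: add_pos_nonneg)
        have vS: "v \<in> S" using uS w(1) less.prems(1) by (simp add: v_def subspace_add subspace_scale)
        have nv: "norm v > 0" using vpos by simp
        have "v /\<^sub>R norm v \<in> ?K" using vS nv less.prems(1) by (simp add: subspace_scale)
        then have "(v /\<^sub>R norm v) \<bullet> f (v /\<^sub>R norm v) \<le> l" using u(2) l_def by blast
        moreover have "(v /\<^sub>R norm v) \<bullet> f (v /\<^sub>R norm v) = (v \<bullet> f v) / (v \<bullet> v)"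
          using linear_scale[OF lf] by (simp add: dot_square_norm power2_eq_square divide_inverse)
        ultimately have "(v \<bullet> f v) / (v \<bullet> v) \<le> l" by simp
        then have le: "v \<bullet> f v \<le> l * (v \<bullet> v)" using vpos by (simp add: divide_le_eq)
        have "v \<bullet> f v = l + 2 * t * a + t^2 * (w \<bullet> f w)"
          using sym[of w u] linear_add[OF lf] linear_scale[OF lf]
          by (simp add: v_def a_def l_def inner_add_left inner_add_right inner_commute power2_eq_square algebra_simps)
        then show ?thesis using le vv by (simp add: b_def algebra_simps)
      qed
      show ?thesis
      proof (rule ccontr)
        assume "w \<bullet> f u \<noteq> 0"
        then have a0: "a \<noteq> 0" by (simp add: a_def)
        define t where "t = a / (\<bar>b\<bar> + 1)"
        have h: "2*t*a + t^2 * b \<le> 0" by (rule ineq)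
        have "t^2 * b \<ge> - (t^2 * \<bar>b\<bar>)" using mult_left_mono[of "-\<bar>b\<bar>" b "t^2"] by simp
        moreover have "t^2 * \<bar>b\<bar> \<le> t * a"
        proof -
          have "t^2 * \<bar>b\<bar> = t * a * (\<bar>b\<bar> / (\<bar>b\<bar> + 1))" by (simp add: t_def power2_eq_square field_simps)
          also have "\<dots> \<le> t * a * 1"
            by (rule mult_left_mono) (auto simp: t_def field_simps)
          finally show ?thesis by simp
        qed
        moreover have "t * a > 0" using a0 by (auto simp add: t_def field_simps add_pos_nonneg zero_less_mult_iff linorder_neq_iff)
        ultimately show False using h by linarith
      qed
    qed
    have eig: "f u = l *\<^sub>R u"
    proof -
      define w where "w = f u - l *\<^sub>R u"
      have fuS: "f u \<in> S" using less.prems(2) uS by blast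
      have wS: "w \<in> S" using fuS uS less.prems(1) by (simp add: w_def subspace_diff subspace_scale)
      have wu: "w \<bullet> u = 0" using uu by (simp add: w_def inner_diff_left l_def inner_commute[of "f u" u])
      have "w \<bullet> f u = 0" by (rule key[OF wS wu])
      then have "w \<bullet> w = 0" using wu by (simp add: w_def inner_diff_right)
      then show ?thesis by (simp add: w_def)
    qed
    define S' where "S' = {x \<in> S. x \<bullet> u = 0}"
    have subS': "subspace S'" using less.prems(1) unfolding S'_def subspace_def
      by (auto simp: inner_add_left)
    have invS': "f ` S' \<subseteq> S'"
    proof
      fix y assume "y \<in> f ` S'"
      then obtain x where x: "x \<in> S'" "y = f x" by blast
      have "f x \<in> S" using x less.prems(2) by (auto simp: S'_def)
      moreover have "f x \<bullet> u = 0" using x eig sym[of x u] by (simp add: S'_def)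
      ultimately show "y \<in> S'" using x by (simp add: S'_def)
    qed
    have "span S' \<subset> span S"
    proof -
      have "S' \<subset> S" using uS uu unfolding S'_def by force
      moreover have "span S' = S'" using span_eq_iff[of S'] subS' by blast
      moreover have "span S = S" using span_eq_iff[of S] less.prems(1) by blast
      ultimately show ?thesis by metis
    qed
    then have "dim S' < dim S" by (rule dim_psubset)
    from less.hyps[OF this subS' invS'] obtain B' where B':
      "B' \<subseteq> S'" "finite B'" "pairwise orthogonal B'"
      "\<forall>b\<in>B'. norm b = 1 \<and> f b = (b \<bullet> f b) *\<^sub>R b" "span B' = S'" by blast
    have uB': "u \<notin> B'" using B'(1) uu by (auto simp: S'_def)
    show ?thesis
    proof (intro exI[of _ "insert u B'"] conjI)
      show "insert u B' \<subseteq> S" using B'(1) uS by (auto simp: S'_def)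
      show "finite (insert u B')" using B'(2) by simp
      show "pairwise orthogonal (insert u B')"
        using B'(1,3) uB' unfolding pairwise_insert
        by (auto simp: S'_def orthogonal_def inner_commute)
      show "\<forall>b\<in>insert u B'. norm b = 1 \<and> f b = (b \<bullet> f b) *\<^sub>R b"
        using B'(4) nu eig l_def by auto
      show "span (insert u B') = S"
      proof
        show "span (insert u B') \<subseteq> S"
          using \<open>insert u B' \<subseteq> S\<close> less.prems(1) by (simp add: span_minimal)
        show "S \<subseteq> span (insert u B')"
        proof
          fix x assume xS: "x \<in> S"
          have "x - (x \<bullet> u) *\<^sub>R u \<in> S'" using xS uS uu less.prems(1)
            by (simp add: S'_def inner_diff_left subspace_diff subspace_scale)
          then have "x - (x \<bullet> u) *\<^sub>R u \<in> span (insert u B')"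
            using B'(5) by (metis span_mono subset_insertI subsetD)
          moreover have "(x \<bullet> u) *\<^sub>R u \<in> span (insert u B')" by (simp add: span_base span_scale)
          ultimately have "(x - (x \<bullet> u) *\<^sub>R u) + (x \<bullet> u) *\<^sub>R u \<in> span (insert u B')"
            by (rule span_add)
          then show "x \<in> span (insert u B')" by simp
        qed
      qed
    qed
  qed
qed


lemma sym_matrix_inner:
  fixes A :: "real^'n^'n"
  assumes "transpose A = A" shows "(A *v x) \<bullet> y = x \<bullet> (A *v y)"
proof -
  have "x v* A = A *v x" using vector_transpose_matrix[of x "transpose A"] assms by simp
  then show ?thesis using dot_lmul_matrix[of x A y] by simp
qed

lemma ortho_inner:
  fixes B :: "'a::real_inner set"
  assumes "pairwise orthogonal B" "\<And>b. b \<in> B \<Longrightarrow> norm b = 1" "b \<in> B" "b' \<in> B"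
  shows "b' \<bullet> b = (if b' = b then 1 else 0)"
proof (cases "b' = b")
  case True then show ?thesis using assms(2)[OF assms(3)] by (simp add: dot_square_norm)
next
  case False
  then have "orthogonal b' b" using pairwiseD[OF assms(1) assms(4) assms(3)] by simp
  then show ?thesis using False by (simp add: orthogonal_def)
qed

lemma psd_sqrt_props:
  fixes A :: "real^'n^'n"
  assumes symA: "transpose A = A" and pd: "\<And>v. v \<noteq> 0 \<Longrightarrow> 0 < v \<bullet> (A *v v)"
  shows "transpose (psd_sqrt A) = psd_sqrt A \<and> (\<forall>v. 0 \<le> v \<bullet> (psd_sqrt A *v v))
         \<and> psd_sqrt A ** psd_sqrt A = A"
proof -
  have symf: "\<And>x y. (A *v x) \<bullet> y = x \<bullet> (A *v y)" by (rule sym_matrix_inner[OF symA])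
  obtain B where B: "finite B" "pairwise orthogonal B"
      "\<forall>b\<in>B. norm b = 1 \<and> A *v b = (b \<bullet> (A *v b)) *\<^sub>R b" "span B = UNIV"
    using sym_eigenbasis[OF matrix_vector_mul_linear symf subspace_UNIV] by auto
  define lam where "lam b = b \<bullet> (A *v b)" for b
  have nB: "\<And>b. b\<in>B \<Longrightarrow> norm b = 1" and eB: "\<And>b. b \<in> B \<Longrightarrow> A *v b = lam b *\<^sub>R b"
    using B(3) lam_def by auto
  have lpos: "lam b > 0" if "b \<in> B" for b
  proof -
    have "b \<noteq> 0" using nB[OF that] by auto
    then show ?thesis using pd unfolding lam_def by blast
  qed
  have expand: "(\<Sum>b\<in>B. (x \<bullet> b) *\<^sub>R b) = x" for x
    using orthonormal_basis_expand[OF B(2) nB _ B(1)] B(4) by auto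
  define g where "g x = (\<Sum>b\<in>B. (sqrt (lam b) * (b \<bullet> x)) *\<^sub>R b)" for x
  have lg: "linear g" unfolding linear_iff g_def
    by (simp add: inner_add_right algebra_simps sum.distrib scaleR_sum_right)
  have gcoef: "b \<bullet> g x = sqrt (lam b) * (b \<bullet> x)" if "b \<in> B" for b x
    unfolding g_def by (rule ortho_coeff[OF B(1) B(2) nB that])
  have gb: "g b = sqrt (lam b) *\<^sub>R b" if "b \<in> B" for b
  proof -
    have "g b = (\<Sum>b'\<in>B. (if b' = b then sqrt (lam b) *\<^sub>R b else 0))"
      unfolding g_def by (rule sum.cong) (auto simp: ortho_inner[OF B(2) nB that])
    also have "\<dots> = sqrt (lam b) *\<^sub>R b" using B(1) that by simp
    finally show ?thesis .
  qed
  have sq: "sqrt (lam b) * sqrt (lam b) = lam b" if "b \<in> B" for b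
    using lpos[OF that] by (metis abs_of_pos real_sqrt_mult_self)
  have labs: "\<bar>lam b\<bar> = lam b" if "b \<in> B" for b
    using lpos[OF that] by simp
  define G where "G = matrix g"
  have Gv: "G *v x = g x" for x unfolding G_def using matrix_vector_mul(2)[OF lg] by metis
  have gsym: "x \<bullet> g y = g x \<bullet> y" for x y
    unfolding g_def by (simp add: inner_sum_right inner_sum_left inner_commute mult.commute mult.left_commute)
  have Gsym: "transpose G = G"
  proof -
    have "transpose G *v x = G *v x" for x
    proof -
      have "transpose G *v x = x v* G" using vector_transpose_matrix[of x G] by simp
      also have "\<dots> = G *v x"
        by (rule vec_eq_by_inner) (simp add: dot_lmul_matrix Gv gsym)
      finally show ?thesis .
    qed
    then show ?thesis by (simp add: matrix_eq)
  qed
  have Gpsd: "\<forall>v. 0 \<le> v \<bullet> (G *v v)"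
  proof
    fix v
    have "v \<bullet> (G *v v) = (\<Sum>b\<in>B. sqrt (lam b) * ((b \<bullet> v) * (b \<bullet> v)))"
      unfolding Gv g_def by (simp add: inner_sum_right inner_commute mult.assoc)
    also have "\<dots> \<ge> 0" by (intro sum_nonneg) (metis lpos less_imp_le real_sqrt_ge_zero zero_le_square mult_nonneg_nonneg)
    finally show "0 \<le> v \<bullet> (G *v v)" .
  qed
  have Ax: "A *v x = (\<Sum>b\<in>B. (lam b * (b \<bullet> x)) *\<^sub>R b)" for x
  proof -
    have "A *v x = A *v (\<Sum>b\<in>B. (x \<bullet> b) *\<^sub>R b)" using expand by simp
    also have "\<dots> = (\<Sum>b\<in>B. (x \<bullet> b) *\<^sub>R (A *v b))"
      by (simp add: linear_sum[OF matrix_vector_mul_linear] matrix_vector_mult_scaleR)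
    also have "\<dots> = (\<Sum>b\<in>B. (lam b * (b \<bullet> x)) *\<^sub>R b)"
      by (rule sum.cong) (auto simp: eB inner_commute)
    finally show ?thesis .
  qed
  have GG: "G ** G = A"
  proof -
    have "(G ** G) *v x = A *v x" for x
    proof -
      have "(G ** G) *v x = g (g x)" by (simp add: matrix_vector_mul_assoc[symmetric] Gv)
      also have "\<dots> = (\<Sum>b\<in>B. (lam b * (b \<bullet> x)) *\<^sub>R b)"
        unfolding g_def[of "g x"]
        by (rule sum.cong) (simp_all add: gcoef labs mult.assoc[symmetric])
      finally show ?thesis using Ax by simp
    qed
    then show ?thesis by (simp add: matrix_eq)
  qed
  have uniq: "C = G" if C: "transpose C = C" "\<forall>v. 0 \<le> v \<bullet> (C *v v)" "C ** C = A" for C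
  proof -
    have Cb: "C *v b = sqrt (lam b) *\<^sub>R b" if b: "b \<in> B" for b
    proof -
      define s where "s = sqrt (lam b)"
      have s: "s > 0" "s * s = lam b" using lpos[OF b] by (auto simp: s_def)
      define z where "z = C *v b - s *\<^sub>R b"
      have "C *v (C *v b) = lam b *\<^sub>R b"
        using C(3) eB[OF b] by (simp add: matrix_vector_mul_assoc)
      then have "C *v z = - s *\<^sub>R z"
        using s by (simp add: z_def matrix_vector_mult_diff_distrib matrix_vector_mult_scaleR algebra_simps)
      then have "z \<bullet> (C *v z) = - s * (z \<bullet> z)" by simp
      moreover have "z \<bullet> (C *v z) \<ge> 0" using C(2) by blast
      ultimately have "s * (z \<bullet> z) \<le> 0" by linarith
      then have "z \<bullet> z \<le> 0" using s(1) by (simp add: mult_le_0_iff)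
      then have "z \<bullet> z = 0" using inner_ge_zero[of z] by linarith
      then have "z = 0" by simp
      then show ?thesis by (simp add: z_def s_def)
    qed
    have "C *v x = g x" for x
    proof (rule real_vector.linear_eq_on_span[of "(*v) C" g B x])
      show "linear ((*v) C)" by (rule matrix_vector_mul_linear)
      show "linear g" by (rule lg)
      show "x \<in> span B" using B(4) by simp
      show "C *v b = g b" if "b \<in> B" for b using Cb[OF that] gb[OF that] by simp
    qed
    then show ?thesis by (simp add: matrix_eq Gv)
  qed
  have "\<exists>!C. transpose C = C \<and> (\<forall>v. 0 \<le> v \<bullet> (C *v v)) \<and> C ** C = A"
    using Gsym Gpsd GG uniq by blast
  then show ?thesis unfolding psd_sqrt_def by (rule theI')
qed


lemma inv_sqrt_bound:
  fixes S :: "real^'n^'n"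
  assumes symS: "transpose S = S" and c: "c > 0" and lb: "\<And>v. c * (v \<bullet> v) \<le> v \<bullet> (S *v v)"
  shows "inv_sqrt_opnorm S \<le> 1 / sqrt c"
proof -
  have ker: "\<forall>x. S *v x = 0 \<longrightarrow> x = 0"
  proof (intro allI impI)
    fix x assume "S *v x = 0"
    then have "c * (x \<bullet> x) \<le> 0" using lb[of x] by simp
    then have "x \<bullet> x \<le> 0" using c by (simp add: mult_le_0_iff)
    then have "x \<bullet> x = 0" using inner_ge_zero[of x] by linarith
    then show "x = 0" by simp
  qed
  then obtain B where "B ** S = mat 1" using matrix_left_invertible_ker by blast
  then have "S ** B = mat 1 \<and> B ** S = mat 1" using matrix_left_right_inverse by blast
  then have "\<exists>A'. S ** A' = mat 1 \<and> A' ** S = mat 1" by blast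
  then have inv: "S ** matrix_inv S = mat 1 \<and> matrix_inv S ** S = mat 1"
    unfolding matrix_inv_def by (rule someI_ex)
  define Si where "Si = matrix_inv S"
  have SSi: "S *v (Si *v x) = x" for x using inv
    by (simp add: Si_def matrix_vector_mul_assoc matrix_vector_mul_lid)
  have symSi': "(Si *v x) \<bullet> y = x \<bullet> (Si *v y)" for x y
  proof -
    have "(Si *v x) \<bullet> y = (Si *v x) \<bullet> (S *v (Si *v y))" by (simp add: SSi)
    also have "\<dots> = (S *v (Si *v x)) \<bullet> (Si *v y)" by (simp add: sym_matrix_inner[OF symS])
    also have "\<dots> = x \<bullet> (Si *v y)" by (simp add: SSi)
    finally show ?thesis .
  qed
  have symSi: "transpose Si = Si"
  proof -
    have "transpose Si *v x = Si *v x" for x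
    proof -
      have "transpose Si *v x = x v* Si" using vector_transpose_matrix[of x Si] by simp
      also have "\<dots> = Si *v x"
        by (rule vec_eq_by_inner) (simp add: dot_lmul_matrix symSi')
      finally show ?thesis .
    qed
    then show ?thesis by (simp add: matrix_eq)
  qed
  have wb: "norm (Si *v v) * c \<le> norm v" for v
  proof -
    define w where "w = Si *v v"
    have "c * (w \<bullet> w) \<le> w \<bullet> (S *v w)" by (rule lb)
    also have "\<dots> = w \<bullet> v" by (simp add: w_def SSi)
    also have "\<dots> \<le> norm w * norm v" by (rule norm_cauchy_schwarz)
    finally have "c * (norm w * norm w) \<le> norm w * norm v" by (simp add: dot_square_norm power2_eq_square)
    then have "norm w * (norm w * c) \<le> norm w * norm v" by (simp add: algebra_simps)
    then show ?thesis
      by (cases "norm w = 0") (auto simp: w_def c mult_le_cancel_left_pos)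
  qed
  have quad: "v \<bullet> (Si *v v) \<le> (v \<bullet> v) / c" for v
  proof -
    have "v \<bullet> (Si *v v) \<le> norm v * norm (Si *v v)" by (rule norm_cauchy_schwarz)
    also have "\<dots> \<le> norm v * (norm v / c)"
      using wb[of v] c by (intro mult_left_mono) (auto simp: field_simps)
    also have "\<dots> = (v \<bullet> v) / c" by (simp add: dot_square_norm power2_eq_square)
    finally show ?thesis .
  qed
  have pdSi: "0 < v \<bullet> (Si *v v)" if "v \<noteq> 0" for v
  proof -
    define w where "w = Si *v v"
    have "w \<noteq> 0" using that SSi[of v] by (auto simp: w_def)
    then have "0 < c * (w \<bullet> w)" using c by simp
    also have "\<dots> \<le> w \<bullet> (S *v w)" by (rule lb)
    also have "\<dots> = v \<bullet> (Si *v v)" by (simp add: w_def SSi inner_commute)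
    finally show ?thesis .
  qed
  define R where "R = psd_sqrt Si"
  have R: "transpose R = R" "R ** R = Si"
    using psd_sqrt_props[OF symSi pdSi] by (auto simp: R_def)
  have "norm (R *v v) \<le> 1 / sqrt c * norm v" for v
  proof -
    have "norm (R *v v) ^ 2 = (R *v v) \<bullet> (R *v v)" by (simp add: dot_square_norm)
    also have "\<dots> = v \<bullet> (R *v (R *v v))" by (simp add: sym_matrix_inner[OF R(1)])
    also have "\<dots> = v \<bullet> (Si *v v)" by (simp add: matrix_vector_mul_assoc R(2))
    also have "\<dots> \<le> (v \<bullet> v) / c" by (rule quad)
    also have "\<dots> = (1 / sqrt c * norm v) ^ 2"
      using c by (simp add: dot_square_norm power_mult_distrib power_divide)
    finally have "norm (R *v v) ^ 2 \<le> (1 / sqrt c * norm v) ^ 2" .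
    moreover have "0 \<le> 1 / sqrt c * norm v" using c by simp
    ultimately show ?thesis by (rule power2_le_imp_le)
  qed
  then have "onorm (\<lambda>v. R *v v) \<le> 1 / sqrt c" by (rule onorm_le)
  then show ?thesis by (simp add: inv_sqrt_opnorm_def R_def Si_def)
qed

context prob_space
begin

lemma int_ind_bounded:
  fixes f :: "'a \<Rightarrow> real" and B :: real
  assumes A: "A \<in> events" and f: "f \<in> borel_measurable M" and b: "\<And>\<omega>. \<omega> \<in> A \<Longrightarrow> \<bar>f \<omega>\<bar> \<le> B"
  shows "integrable M (\<lambda>\<omega>. indicator A \<omega> * f \<omega>)"
proof (rule finite_measure.integrable_const_bound[where B = "\<bar>B\<bar>"])
  show "finite_measure M" by (rule finite_measure_axioms)
  show "AE x in M. norm (indicator A x * f x) \<le> \<bar>B\<bar>"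
  proof (rule AE_I2)
    fix x
    show "norm (indicator A x * f x) \<le> \<bar>B\<bar>"
      using b[of x] by (cases "x \<in> A") auto
  qed
  show "(\<lambda>\<omega>. indicator A \<omega> * f \<omega>) \<in> borel_measurable M" using A f by measurable
qed

lemma quad_identity:
  fixes Z :: "'a \<Rightarrow> real"
  assumes A: "A \<in> events" and Zm: "Z \<in> borel_measurable M" and bnd: "\<And>\<omega>. \<omega> \<in> A \<Longrightarrow> \<bar>Z \<omega>\<bar> \<le> K"
  shows "(\<integral>\<omega>. indicator A \<omega> * (Z \<omega> - c)^2 \<partial>M) =
         (\<integral>\<omega>. indicator A \<omega> * (Z \<omega>)^2 \<partial>M) - 2*c*(\<integral>\<omega>. indicator A \<omega> * Z \<omega> \<partial>M) + c^2 * prob A"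
proof -
  have K: "\<And>\<omega>. \<omega> \<in> A \<Longrightarrow> \<bar>(Z \<omega>)^2\<bar> \<le> K * K"
  proof -
    fix \<omega> assume "\<omega> \<in> A"
    then have h: "\<bar>Z \<omega>\<bar> \<le> K" by (rule bnd)
    then have "\<bar>Z \<omega>\<bar> * \<bar>Z \<omega>\<bar> \<le> K * K" by (intro mult_mono) auto
    then show "\<bar>(Z \<omega>)^2\<bar> \<le> K * K" by (simp add: power2_eq_square abs_mult)
  qed
  have i1: "integrable M (\<lambda>\<omega>. indicator A \<omega> * Z \<omega>)" by (rule int_ind_bounded[OF A Zm bnd])
  have i2: "integrable M (\<lambda>\<omega>. indicator A \<omega> * (Z \<omega>)^2)"
    by (rule int_ind_bounded[OF A _ K]) (use Zm in measurable)
  have i0: "integrable M (\<lambda>\<omega>. indicator A \<omega> * (1::real))"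
    by (rule int_ind_bounded[where B=1, OF A]) auto
  have eq: "(\<lambda>\<omega>. indicator A \<omega> * (Z \<omega> - c)^2) =
     (\<lambda>\<omega>. (indicator A \<omega> * (Z \<omega>)^2 - (2*c) * (indicator A \<omega> * Z \<omega>)) + c^2 * (indicator A \<omega> * 1))"
    by (auto simp: fun_eq_iff power2_eq_square algebra_simps)
  have "(\<integral>\<omega>. indicator A \<omega> * (Z \<omega> - c)^2 \<partial>M) =
     (\<integral>\<omega>. (indicator A \<omega> * (Z \<omega>)^2 - (2*c) * (indicator A \<omega> * Z \<omega>)) \<partial>M) + (\<integral>\<omega>. c^2 * (indicator A \<omega> * 1) \<partial>M)"
    unfolding eq using i0 i1 i2 by (intro Bochner_Integration.integral_add) auto
  also have "\<dots> = (\<integral>\<omega>. indicator A \<omega> * (Z \<omega>)^2 \<partial>M) - 2*c*(\<integral>\<omega>. indicator A \<omega> * Z \<omega> \<partial>M) + c^2 * prob A"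
    using i1 i2 A by (simp add: Bochner_Integration.integral_diff)
  finally show ?thesis .
qed

lemma var_mono:
  fixes Z :: "'a \<Rightarrow> real"
  assumes A: "A \<in> events" and A': "A' \<in> events" and sub: "A' \<subseteq> A"
    and P': "prob A' > 0" and P: "prob A > 0"
    and Zm: "Z \<in> borel_measurable M" and bnd: "\<And>\<omega>. \<omega> \<in> A \<Longrightarrow> \<bar>Z \<omega>\<bar> \<le> K"
  shows "(\<integral>\<omega>. indicator A' \<omega> * (Z \<omega>)^2 \<partial>M) - (\<integral>\<omega>. indicator A' \<omega> * Z \<omega> \<partial>M)^2 / prob A'
       \<le> (\<integral>\<omega>. indicator A \<omega> * (Z \<omega>)^2 \<partial>M) - (\<integral>\<omega>. indicator A \<omega> * Z \<omega> \<partial>M)^2 / prob A"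
proof -
  define e1 where "e1 = (\<integral>\<omega>. indicator A \<omega> * Z \<omega> \<partial>M)"
  define e2 where "e2 = (\<integral>\<omega>. indicator A \<omega> * (Z \<omega>)^2 \<partial>M)"
  define f1 where "f1 = (\<integral>\<omega>. indicator A' \<omega> * Z \<omega> \<partial>M)"
  define f2 where "f2 = (\<integral>\<omega>. indicator A' \<omega> * (Z \<omega>)^2 \<partial>M)"
  define c where "c = e1 / prob A"
  have bnd': "\<And>\<omega>. \<omega> \<in> A' \<Longrightarrow> \<bar>Z \<omega>\<bar> \<le> K" using sub bnd by blast
  have bc: "\<bar>(Z \<omega> - c)^2\<bar> \<le> (K + \<bar>c\<bar>) * (K + \<bar>c\<bar>)" if "\<omega> \<in> A" for \<omega>
  proof -
    have "\<bar>Z \<omega> - c\<bar> \<le> K + \<bar>c\<bar>" using bnd[OF that] by linarith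
    then have "\<bar>Z \<omega> - c\<bar> * \<bar>Z \<omega> - c\<bar> \<le> (K + \<bar>c\<bar>) * (K + \<bar>c\<bar>)" by (intro mult_mono) auto
    then show ?thesis by (simp add: power2_eq_square abs_mult)
  qed
  have mZc: "(\<lambda>\<omega>. (Z \<omega> - c)^2) \<in> borel_measurable M" using Zm by measurable
  have iA: "integrable M (\<lambda>\<omega>. indicator A \<omega> * (Z \<omega> - c)^2)"
    by (rule int_ind_bounded[OF A mZc bc])
  have iA': "integrable M (\<lambda>\<omega>. indicator A' \<omega> * (Z \<omega> - c)^2)"
    by (rule int_ind_bounded[OF A' mZc]) (use bc sub in blast)
  have "e2 - e1^2 / prob A = e2 - 2*c*e1 + c^2 * prob A"
    using P by (simp add: c_def power2_eq_square field_simps)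
  also have "\<dots> = (\<integral>\<omega>. indicator A \<omega> * (Z \<omega> - c)^2 \<partial>M)"
    unfolding e1_def e2_def by (rule quad_identity[OF A Zm bnd, symmetric])
  also have "\<dots> \<ge> (\<integral>\<omega>. indicator A' \<omega> * (Z \<omega> - c)^2 \<partial>M)"
  proof (rule Bochner_Integration.integral_mono[OF iA' iA])
    fix \<omega> show "indicator A' \<omega> * (Z \<omega> - c)^2 \<le> indicator A \<omega> * (Z \<omega> - c)^2"
      using sub by (cases "\<omega> \<in> A'"; cases "\<omega> \<in> A") auto
  qed
  moreover have "(\<integral>\<omega>. indicator A' \<omega> * (Z \<omega> - c)^2 \<partial>M) = f2 - 2*c*f1 + c^2 * prob A'"
    unfolding f1_def f2_def by (rule quad_identity[OF A' Zm bnd'])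
  moreover have "f2 - 2*c*f1 + c^2 * prob A' \<ge> f2 - f1^2 / prob A'"
  proof -
    have "0 \<le> prob A' * (c - f1 / prob A')^2" using P' by simp
    also have "prob A' * (c - f1 / prob A')^2 = c^2 * prob A' - 2*c*f1 + f1^2 / prob A'"
      using P' by (simp add: power2_eq_square field_simps)
    finally show ?thesis by linarith
  qed
  ultimately show ?thesis unfolding e1_def[symmetric] e2_def[symmetric] f1_def[symmetric] f2_def[symmetric]
    by linarith
qed

lemma var_pos:
  fixes Z :: "'a \<Rightarrow> real"
  assumes A: "A \<in> events" and P: "prob A > 0"
    and Zm: "Z \<in> borel_measurable M" and bnd: "\<And>\<omega>. \<omega> \<in> A \<Longrightarrow> \<bar>Z \<omega>\<bar> \<le> K"
    and nd: "prob {\<omega> \<in> A. Z \<omega> = (\<integral>\<omega>. indicator A \<omega> * Z \<omega> \<partial>M) / prob A} < prob A"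
  shows "0 < (\<integral>\<omega>. indicator A \<omega> * (Z \<omega>)^2 \<partial>M) - (\<integral>\<omega>. indicator A \<omega> * Z \<omega> \<partial>M)^2 / prob A"
proof -
  define e1 where "e1 = (\<integral>\<omega>. indicator A \<omega> * Z \<omega> \<partial>M)"
  define e2 where "e2 = (\<integral>\<omega>. indicator A \<omega> * (Z \<omega>)^2 \<partial>M)"
  define c where "c = e1 / prob A"
  have bc: "\<bar>(Z \<omega> - c)^2\<bar> \<le> (K + \<bar>c\<bar>) * (K + \<bar>c\<bar>)" if "\<omega> \<in> A" for \<omega>
  proof -
    have "\<bar>Z \<omega> - c\<bar> \<le> K + \<bar>c\<bar>" using bnd[OF that] by linarith
    then have "\<bar>Z \<omega> - c\<bar> * \<bar>Z \<omega> - c\<bar> \<le> (K + \<bar>c\<bar>) * (K + \<bar>c\<bar>)" by (intro mult_mono) auto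
    then show ?thesis by (simp add: power2_eq_square abs_mult)
  qed
  have mZc: "(\<lambda>\<omega>. (Z \<omega> - c)^2) \<in> borel_measurable M" using Zm by measurable
  have iA: "integrable M (\<lambda>\<omega>. indicator A \<omega> * (Z \<omega> - c)^2)"
    by (rule int_ind_bounded[OF A mZc bc])
  have eq: "e2 - e1^2 / prob A = (\<integral>\<omega>. indicator A \<omega> * (Z \<omega> - c)^2 \<partial>M)"
  proof -
    have "e2 - e1^2 / prob A = e2 - 2*c*e1 + c^2 * prob A"
      using P by (simp add: c_def power2_eq_square field_simps)
    also have "\<dots> = (\<integral>\<omega>. indicator A \<omega> * (Z \<omega> - c)^2 \<partial>M)"
      unfolding e1_def e2_def by (rule quad_identity[OF A Zm bnd, symmetric])
    finally show ?thesis .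
  qed
  have nn: "AE \<omega> in M. 0 \<le> indicator A \<omega> * (Z \<omega> - c)^2" by (rule AE_I2) simp
  have ge: "0 \<le> (\<integral>\<omega>. indicator A \<omega> * (Z \<omega> - c)^2 \<partial>M)" by (rule integral_nonneg_AE[OF nn])
  show ?thesis
  proof (rule ccontr)
    assume "\<not> ?thesis"
    then have "(\<integral>\<omega>. indicator A \<omega> * (Z \<omega> - c)^2 \<partial>M) = 0"
      using eq ge unfolding e1_def e2_def by linarith
    then have ae: "AE \<omega> in M. indicator A \<omega> * (Z \<omega> - c)^2 = 0"
      using integral_nonneg_eq_0_iff_AE[OF iA nn] by simp
    have "AE \<omega> in M. (\<omega> \<in> {\<omega> \<in> A. Z \<omega> = c}) = (\<omega> \<in> A)"
      using ae by eventually_elim (auto simp: indicator_def split: if_splits)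
    moreover have "{\<omega> \<in> A. Z \<omega> = c} \<in> events"
    proof -
      have "{\<omega> \<in> A. Z \<omega> = c} = A \<inter> {\<omega> \<in> space M. Z \<omega> = c}" using sets.sets_into_space[OF A] by auto
      also have "\<dots> \<in> events" using A Zm by measurable
      finally show ?thesis .
    qed
    ultimately have "prob {\<omega> \<in> A. Z \<omega> = c} = prob A" using A by (rule measure_eq_AE)
    then show False using nd unfolding c_def e1_def by simp
  qed
qed

end

lemma isnorm_basic:
  fixes N :: "real^'d \<Rightarrow> real"
  assumes "is_norm N"
  shows "N 0 = 0" "N (-x) = N x" "N x \<ge> 0" "N (x - y) = N (y - x)"
proof -
  have sc: "\<And>c x. N (c *\<^sub>R x) = \<bar>c\<bar> * N x" and tr: "\<And>x y. N (x + y) \<le> N x + N y"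
    using assms unfolding is_norm_def by auto
  show z: "N 0 = 0" using sc[of 0 0] by simp
  show m: "N (-x) = N x" for x using sc[of "-1" x] by simp
  show "N x \<ge> 0" using tr[of x "-x"] z m[of x] by simp
  show "N (x - y) = N (y - x)" using m[of "y - x"] by simp
qed

lemma isnorm_sum:
  fixes N :: "real^'d \<Rightarrow> real"
  assumes "is_norm N" "finite A"
  shows "N (\<Sum>a\<in>A. f a) \<le> (\<Sum>a\<in>A. N (f a))"
  using assms(2)
proof (induction A rule: finite_induct)
  case empty then show ?case using isnorm_basic[OF assms(1)] by simp
next
  case (insert a A)
  have "N (f a + sum f A) \<le> N (f a) + N (sum f A)" using assms(1) unfolding is_norm_def by blast
  then show ?case using insert by simp
qed

lemma isnorm_upper:
  fixes N :: "real^'d \<Rightarrow> real"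
  assumes "is_norm N"
  shows "\<exists>K\<ge>0. \<forall>x. N x \<le> K * norm x"
proof (intro exI[of _ "\<Sum>b\<in>Basis. N b"] conjI allI)
  show "0 \<le> (\<Sum>b\<in>Basis. N b)" using isnorm_basic(3)[OF assms] by (simp add: sum_nonneg)
  fix x :: "real^'d"
  have sc: "\<And>c x. N (c *\<^sub>R x) = \<bar>c\<bar> * N x" using assms unfolding is_norm_def by auto
  have "N x = N (\<Sum>b\<in>Basis. (x \<bullet> b) *\<^sub>R b)" by (simp add: euclidean_representation)
  also have "\<dots> \<le> (\<Sum>b\<in>Basis. N ((x \<bullet> b) *\<^sub>R b))" by (rule isnorm_sum[OF assms]) simp
  also have "\<dots> = (\<Sum>b\<in>Basis. \<bar>x \<bullet> b\<bar> * N b)" by (simp add: sc)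
  also have "\<dots> \<le> (\<Sum>b\<in>Basis. norm x * N b)"
    by (intro sum_mono mult_right_mono Basis_le_norm isnorm_basic(3)[OF assms])
  also have "\<dots> = (\<Sum>b\<in>Basis. N b) * norm x" by (simp add: sum_distrib_left mult.commute)
  finally show "N x \<le> (\<Sum>b\<in>Basis. N b) * norm x" .
qed

lemma isnorm_cont:
  fixes N :: "real^'d \<Rightarrow> real"
  assumes "is_norm N"
  shows "continuous_on UNIV N"
proof -
  obtain K where K: "K \<ge> 0" "\<And>x. N x \<le> K * norm x" using isnorm_upper[OF assms] by blast
  have tr: "\<And>x y. N (x + y) \<le> N x + N y" using assms unfolding is_norm_def by auto
  have "K-lipschitz_on UNIV N"
  proof (rule lipschitz_onI)
    fix x y :: "real^'d"
    have "N x \<le> N (x - y) + N y" using tr[of "x - y" y] by simp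
    moreover have "N y \<le> N (y - x) + N x" using tr[of "y - x" x] by simp
    moreover have "N (y - x) = N (x - y)" by (rule isnorm_basic(4)[OF assms])
    moreover have "N (x - y) \<le> K * norm (x - y)" by (rule K(2))
    ultimately show "dist (N x) (N y) \<le> K * dist x y"
      by (simp add: dist_real_def dist_norm abs_le_iff)
  qed (use K in auto)
  then show ?thesis by (rule lipschitz_on_continuous_on)
qed

lemma isnorm_lower:
  fixes N :: "real^'d \<Rightarrow> real"
  assumes "is_norm N"
  shows "\<exists>k>0. \<forall>x. k * norm x \<le> N x"
proof -
  have sc: "\<And>c x. N (c *\<^sub>R x) = \<bar>c\<bar> * N x" and z: "\<And>x. N x = 0 \<longleftrightarrow> x = 0"
    using assms unfolding is_norm_def by auto
  obtain b :: "real^'d" where b: "b \<in> Basis" using nonempty_Basis by blast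
  have ne: "sphere (0::real^'d) 1 \<noteq> {}" using b by (auto simp: norm_Basis)
  obtain u where u: "u \<in> sphere 0 1" "\<And>y. y \<in> sphere 0 1 \<Longrightarrow> N u \<le> N y"
    using continuous_attains_inf[OF compact_sphere ne continuous_on_subset[OF isnorm_cont[OF assms]]] by blast
  have "u \<noteq> 0" using u(1) by auto
  then have k: "N u > 0" using z[of u] isnorm_basic(3)[OF assms, of u] by linarith
  show ?thesis
  proof (intro exI[of _ "N u"] conjI allI k)
    fix x :: "real^'d"
    show "N u * norm x \<le> N x"
    proof (cases "x = 0")
      case True then show ?thesis using isnorm_basic(3)[OF assms, of 0] by simp
    next
      case False
      then have "x /\<^sub>R norm x \<in> sphere 0 1" by simp
      then have "N u \<le> N (x /\<^sub>R norm x)" by (rule u(2))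
      also have "\<dots> = N x / norm x" by (simp add: sc divide_inverse mult.commute)
      finally show ?thesis using False by (simp add: field_simps)
    qed
  qed
qed

lemma dsum_helper:
  fixes f g :: "'i \<Rightarrow> 'j \<Rightarrow> real"
  shows "(\<Sum>i\<in>I. \<Sum>j\<in>J. (f i j - g i j / P) / P) = ((\<Sum>i\<in>I. \<Sum>j\<in>J. f i j) - (\<Sum>i\<in>I. \<Sum>j\<in>J. g i j) / P) / P"
proof -
  have "(\<Sum>i\<in>I. \<Sum>j\<in>J. (f i j - g i j / P) / P) = (\<Sum>i\<in>I. \<Sum>j\<in>J. (f i j - g i j / P)) / P"
    by (simp add: sum_divide_distrib)
  also have "(\<Sum>i\<in>I. \<Sum>j\<in>J. (f i j - g i j / P)) = (\<Sum>i\<in>I. \<Sum>j\<in>J. f i j) - (\<Sum>i\<in>I. \<Sum>j\<in>J. g i j / P)"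
    by (simp add: sum_subtractf)
  also have "(\<Sum>i\<in>I. \<Sum>j\<in>J. g i j / P) = (\<Sum>i\<in>I. \<Sum>j\<in>J. g i j) / P"
    by (simp add: sum_divide_distrib)
  finally show ?thesis .
qed

lemma (in prob_space) cov_quad:
  fixes X :: "'a \<Rightarrow> real^'d" and N :: "real^'d \<Rightarrow> real"
  assumes Xm: "X \<in> borel_measurable M" and A: "trunc_event M X N y \<in> events"
    and bnd: "\<And>\<omega> i. \<omega> \<in> trunc_event M X N y \<Longrightarrow> \<bar>X \<omega> $ i\<bar> \<le> K"
    and Ppos: "prob (trunc_event M X N y) > 0"
  shows "v \<bullet> (trunc_cov M X N y *v v) =
    ((\<integral>\<omega>. indicator (trunc_event M X N y) \<omega> * (v \<bullet> X \<omega>)^2 \<partial>M)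
      - (\<integral>\<omega>. indicator (trunc_event M X N y) \<omega> * (v \<bullet> X \<omega>) \<partial>M)^2 / prob (trunc_event M X N y))
     / prob (trunc_event M X N y)"
proof -
  define A where "A = trunc_event M X N y"
  define P where "P = prob A"
  have P0: "P > 0" using Ppos by (simp add: P_def A_def)
  have AE: "A \<in> events" using A by (simp add: A_def)
  define E1 where "E1 i = (\<integral>\<omega>. indicator A \<omega> * X \<omega> $ i \<partial>M)" for i
  define E2 where "E2 i j = (\<integral>\<omega>. indicator A \<omega> * (X \<omega> $ i * X \<omega> $ j) \<partial>M)" for i j
  have mi: "(\<lambda>\<omega>. X \<omega> $ i) \<in> borel_measurable M" for i using measurable_compose[OF Xm borel_measurable_nth] by simp
  have bi: "\<bar>X \<omega> $ i\<bar> \<le> K" if "\<omega> \<in> A" for \<omega> i using bnd that by (simp add: A_def)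
  have bij: "\<bar>X \<omega> $ i * X \<omega> $ j\<bar> \<le> K * K" if "\<omega> \<in> A" for \<omega> i j
  proof -
    have K0: "0 \<le> K" using bi[OF that, of i] abs_ge_zero[of "X \<omega> $ i"] by linarith
    have "\<bar>X \<omega> $ i\<bar> * \<bar>X \<omega> $ j\<bar> \<le> K * K" using bi[OF that] K0 by (intro mult_mono) auto
    then show ?thesis by (simp add: abs_mult)
  qed
  have i1: "integrable M (\<lambda>\<omega>. indicator A \<omega> * X \<omega> $ i)" for i
    by (rule int_ind_bounded[OF AE mi bi])
  have i2: "integrable M (\<lambda>\<omega>. indicator A \<omega> * (X \<omega> $ i * X \<omega> $ j))" for i j
    by (rule int_ind_bounded[OF AE _ bij]) (use mi in measurable)
  have cov: "trunc_cov M X N y $ i $ j = E2 i j / P - E1 i / P * (E1 j / P)" for i j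
    by (simp add: trunc_cov_def cond_exp_event_def Let_def A_def E1_def E2_def P_def)
  have lhs: "v \<bullet> (trunc_cov M X N y *v v) =
      (\<Sum>i\<in>UNIV. \<Sum>j\<in>UNIV. v$i * v$j * (E2 i j / P - E1 i / P * (E1 j / P)))"
    by (simp add: inner_vec_def matrix_vector_mult_def cov sum_distrib_left mult_ac)
  have e1: "(\<integral>\<omega>. indicator A \<omega> * (v \<bullet> X \<omega>) \<partial>M) = (\<Sum>i\<in>UNIV. v$i * E1 i)"
  proof -
    have "(\<lambda>\<omega>. indicator A \<omega> * (v \<bullet> X \<omega>)) = (\<lambda>\<omega>. \<Sum>i\<in>UNIV. v$i * (indicator A \<omega> * X \<omega> $ i))"
      by (simp add: fun_eq_iff inner_vec_def sum_distrib_left mult_ac)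
    then have "(\<integral>\<omega>. indicator A \<omega> * (v \<bullet> X \<omega>) \<partial>M) = (\<Sum>i\<in>UNIV. (\<integral>\<omega>. v$i * (indicator A \<omega> * X \<omega> $ i) \<partial>M))"
      using i1 by (simp add: Bochner_Integration.integral_sum)
    then show ?thesis by (simp add: E1_def)
  qed
  have e2: "(\<integral>\<omega>. indicator A \<omega> * (v \<bullet> X \<omega>)^2 \<partial>M) = (\<Sum>i\<in>UNIV. \<Sum>j\<in>UNIV. v$i * v$j * E2 i j)"
  proof -
    have "(\<lambda>\<omega>. indicator A \<omega> * (v \<bullet> X \<omega>)^2) =
        (\<lambda>\<omega>. \<Sum>i\<in>UNIV. \<Sum>j\<in>UNIV. v$i * v$j * (indicator A \<omega> * (X \<omega> $ i * X \<omega> $ j)))"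
      by (simp add: fun_eq_iff inner_vec_def power2_eq_square sum_product sum_distrib_left mult_ac)
    then have "(\<integral>\<omega>. indicator A \<omega> * (v \<bullet> X \<omega>)^2 \<partial>M) =
        (\<Sum>i\<in>UNIV. \<Sum>j\<in>UNIV. (\<integral>\<omega>. v$i * v$j * (indicator A \<omega> * (X \<omega> $ i * X \<omega> $ j)) \<partial>M))"
      using i2 by (simp add: Bochner_Integration.integral_sum integrable_sum)
    then show ?thesis by (simp add: E2_def)
  qed
  have sq: "(\<Sum>i\<in>UNIV. v$i * E1 i)^2 = (\<Sum>i\<in>UNIV. \<Sum>j\<in>UNIV. (v$i * E1 i) * (v$j * E1 j))"
    by (simp add: power2_eq_square sum_product)
  have "((\<Sum>i\<in>UNIV. \<Sum>j\<in>UNIV. v$i * v$j * E2 i j) - (\<Sum>i\<in>UNIV. \<Sum>j\<in>UNIV. (v$i * E1 i) * (v$j * E1 j)) / P) / P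
      = (\<Sum>i\<in>UNIV. \<Sum>j\<in>UNIV. (v$i * v$j * E2 i j - (v$i * E1 i) * (v$j * E1 j) / P) / P)"
    by (rule dsum_helper[symmetric])
  also have "\<dots> = (\<Sum>i\<in>UNIV. \<Sum>j\<in>UNIV. v$i * v$j * (E2 i j / P - E1 i / P * (E1 j / P)))"
    using P0 by (intro sum.cong refl) (simp add: field_simps power2_eq_square)
  finally show ?thesis
    using lhs e1 e2 sq by (simp add: A_def[symmetric] P_def[symmetric])
qed

theorem lemmaB1:
  fixes M :: "'a measure" and X :: "'a \<Rightarrow> real^'d" and N :: "real^'d \<Rightarrow> real" and \<alpha> :: real
  assumes "prob_space M"
    and "is_norm N"
    and "X \<in> borel_measurable M"
    and C1: "\<And>y. y > 0 \<Longrightarrow> nondegenerate_trunc M X N y"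
    and C2_ac: "absolutely_continuous lborel (distr M borel (\<lambda>\<omega>. N (X \<omega>)))"
    and C2_rv: "regvar_tail M (\<lambda>\<omega>. N (X \<omega>)) \<alpha>"
    and "\<alpha> > 0"
    and "2 < \<alpha>" and "\<alpha> \<le> 3"
  shows "\<exists>C>0. \<exists>\<delta>>0. measure M (trunc_event M X N \<delta>) < 1 \<and>
           (\<forall>y\<ge>\<delta>. inv_sqrt_opnorm (trunc_cov M X N y) \<le> C)"
proof -
  interpret prob_space M by (rule assms(1))
  have nN: "is_norm N" and Xm: "X \<in> borel_measurable M" using assms(2,3) .
  have Nm: "N \<in> borel_measurable borel"
    by (rule borel_measurable_continuous_onI[OF isnorm_cont[OF nN]])
  have Rm: "(\<lambda>\<omega>. N (X \<omega>)) \<in> borel_measurable M" using measurable_compose[OF Xm Nm] by simp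
  have Aev: "trunc_event M X N y \<in> events" for y
    unfolding trunc_event_def using Rm by measurable
  obtain k where k: "k > 0" "\<And>x. k * norm x \<le> N x" using isnorm_lower[OF nN] by blast
  have nX: "norm (X \<omega>) \<le> y / k" if "\<omega> \<in> trunc_event M X N y" for y \<omega>
  proof -
    have "k * norm (X \<omega>) \<le> y" using k(2)[of "X \<omega>"] that by (auto simp: trunc_event_def)
    then show ?thesis using k(1) by (simp add: field_simps)
  qed
  have bX: "\<bar>X \<omega> $ i\<bar> \<le> y / k" if "\<omega> \<in> trunc_event M X N y" for y \<omega> i
    using component_le_norm_cart[of "X \<omega>" i] nX[OF that] by linarith
  have bZ: "\<bar>v \<bullet> X \<omega>\<bar> \<le> norm v * (y / k)" if "\<omega> \<in> trunc_event M X N y" for v y \<omega>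
    using Cauchy_Schwarz_ineq2[of v "X \<omega>"] nX[OF that] by (meson mult_left_mono norm_ge_zero order_trans)
  have Zm: "(\<lambda>\<omega>. v \<bullet> X \<omega>) \<in> borel_measurable M" for v
    by (rule borel_measurable_inner[OF borel_measurable_const Xm])
  define m where "m t = measure M {\<omega> \<in> space M. N (X \<omega>) > t}" for t
  have "\<exists>t\<ge>1. m t \<noteq> 0"
  proof (rule ccontr)
    assume "\<not> ?thesis"
    then have z: "\<And>t. t \<ge> 1 \<Longrightarrow> m t = 0" by auto
    have all: "\<forall>x>0. ((\<lambda>t. m (t * x) / m t) \<longlongrightarrow> x powr (-\<alpha>)) at_top"
      using C2_rv unfolding regvar_tail_def m_def by blast
    have one: "(1::real) powr (-\<alpha>) = 1" by simp
    have lim1': "((\<lambda>t. m t / m t) \<longlongrightarrow> 1) at_top"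
      using all[rule_format, of 1] by (simp only: mult_1_right one zero_less_one simp_thms)
    have "\<forall>\<^sub>F t in at_top. m t / m t = 0"
      using eventually_ge_at_top[of "1::real"] by eventually_elim (simp add: z)
    then have "((\<lambda>t. m t / m t) \<longlongrightarrow> 0) at_top" by (rule tendsto_eventually)
    from tendsto_unique[OF trivial_limit_at_top_linorder lim1' this] show False by simp
  qed
  then obtain \<delta> where \<delta>: "\<delta> \<ge> 1" "m \<delta> \<noteq> 0" by blast
  have \<delta>0: "\<delta> > 0" using \<delta>(1) by linarith
  define A where "A = trunc_event M X N"
  have compl: "space M - A \<delta> = {\<omega> \<in> space M. N (X \<omega>) > \<delta>}"
    by (auto simp: A_def trunc_event_def)
  have "prob (space M - A \<delta>) = 1 - prob (A \<delta>)" using Aev by (simp add: A_def prob_compl)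
  then have PA1: "prob (A \<delta>) < 1" using \<delta>(2) compl unfolding m_def
    by (metis measure_nonneg diff_ge_0_iff_ge le_less not_less diff_gt_0_iff_gt)
  have ndg: "nondegenerate_trunc M X N y" if "y \<ge> \<delta>" for y using C1 \<delta>0 that by simp
  have Ppos: "prob (A y) > 0" if "y \<ge> \<delta>" for y using ndg[OF that] by (simp add: nondegenerate_trunc_def A_def)
  define D where "D y v = (\<integral>\<omega>. indicator (A y) \<omega> * (v \<bullet> X \<omega>)^2 \<partial>M)
      - (\<integral>\<omega>. indicator (A y) \<omega> * (v \<bullet> X \<omega>) \<partial>M)^2 / prob (A y)" for y v
  have qD: "v \<bullet> (trunc_cov M X N y *v v) = D y v / prob (A y)" if "y \<ge> \<delta>" for y v
    unfolding D_def A_def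
    by (rule cov_quad[OF Xm Aev bX]) (use Ppos[OF that] in \<open>simp_all add: A_def\<close>)
  have Dpos: "D \<delta> v > 0" if "v \<noteq> 0" for v
    unfolding D_def
  proof (rule var_pos[OF Aev[of \<delta>, folded A_def] Ppos[OF order_refl] Zm])
    show "\<bar>v \<bullet> X \<omega>\<bar> \<le> norm v * (\<delta> / k)" if "\<omega> \<in> A \<delta>" for \<omega> using bZ that by (simp add: A_def)
    show "prob {\<omega> \<in> A \<delta>. v \<bullet> X \<omega> = (\<integral>\<omega>. indicator (A \<delta>) \<omega> * (v \<bullet> X \<omega>) \<partial>M) / prob (A \<delta>)} < prob (A \<delta>)"
      using ndg[OF order_refl] \<open>v \<noteq> 0\<close> unfolding nondegenerate_trunc_def A_def by blast
  qed
  have Dmono: "D \<delta> v \<le> D y v" if "y \<ge> \<delta>" for y v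
    unfolding D_def
  proof (rule var_mono[OF Aev[of y, folded A_def] Aev[of \<delta>, folded A_def] _ Ppos[OF order_refl] Ppos[OF that] Zm])
    show "A \<delta> \<subseteq> A y" using that by (auto simp: A_def trunc_event_def)
    show "\<bar>v \<bullet> X \<omega>\<bar> \<le> norm v * (y / k)" if "\<omega> \<in> A y" for \<omega> using bZ that by (simp add: A_def)
  qed
  define S where "S = trunc_cov M X N \<delta>"
  have qS: "v \<bullet> (S *v v) = D \<delta> v / prob (A \<delta>)" for v unfolding S_def by (rule qD) simp
  have Spos: "v \<bullet> (S *v v) > 0" if "v \<noteq> 0" for v
    using Dpos[OF that] Ppos[OF order_refl] qS[of v] by simp
  have contq: "continuous_on UNIV (\<lambda>v. v \<bullet> (S *v v))"
  proof -
    have "continuous_on UNIV ((*v) S)" by (rule linear_continuous_on[OF matrix_vector_mul_bounded_linear])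
    then show ?thesis by (intro continuous_on_inner continuous_on_id)
  qed
  obtain b :: "real^'d" where b: "b \<in> Basis" using nonempty_Basis by blast
  have ne: "sphere (0::real^'d) 1 \<noteq> {}" using b by (auto simp: norm_Basis)
  obtain u where u: "u \<in> sphere 0 1" "\<And>w. w \<in> sphere 0 1 \<Longrightarrow> u \<bullet> (S *v u) \<le> w \<bullet> (S *v w)"
    using continuous_attains_inf[OF compact_sphere ne continuous_on_subset[OF contq]] by blast
  define c0 where "c0 = u \<bullet> (S *v u)"
  have "u \<noteq> 0" using u(1) by auto
  then have c0: "c0 > 0" using Spos[of u] by (simp add: c0_def)
  have homog: "(a *\<^sub>R w) \<bullet> (S *v (a *\<^sub>R w)) = a * a * (w \<bullet> (S *v w))" for a w
    by (simp add: matrix_vector_mult_scaleR)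
  have qlow: "c0 * (v \<bullet> v) \<le> v \<bullet> (S *v v)" for v
  proof (cases "v = 0")
    case True then show ?thesis by simp
  next
    case False
    define w where "w = v /\<^sub>R norm v"
    have w: "w \<in> sphere 0 1" using False by (simp add: w_def)
    have vw: "v = norm v *\<^sub>R w" using False by (simp add: w_def)
    have "c0 * (v \<bullet> v) = norm v * norm v * c0" by (simp add: dot_square_norm power2_eq_square)
    also have "\<dots> \<le> norm v * norm v * (w \<bullet> (S *v w))"
      using u(2)[OF w] by (intro mult_left_mono) (auto simp: c0_def)
    also have "\<dots> = v \<bullet> (S *v v)" using homog[of "norm v" w] vw by metis
    finally show ?thesis .
  qed
  define c where "c = prob (A \<delta>) * c0"
  have cpos: "c > 0" using c0 Ppos[OF order_refl] by (simp add: c_def)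
  have main: "c * (v \<bullet> v) \<le> v \<bullet> (trunc_cov M X N y *v v)" if y: "y \<ge> \<delta>" for y v
  proof -
    have P1: "prob (A y) \<le> 1" by simp
    have P0: "prob (A y) > 0" by (rule Ppos[OF y])
    have "c * (v \<bullet> v) = prob (A \<delta>) * (c0 * (v \<bullet> v))" by (simp add: c_def)
    also have "\<dots> \<le> prob (A \<delta>) * (v \<bullet> (S *v v))"
      using qlow[of v] by (intro mult_left_mono) auto
    also have "\<dots> = D \<delta> v" using qS[of v] Ppos[OF order_refl] by simp
    also have "\<dots> \<le> D y v" by (rule Dmono[OF y])
    also have "\<dots> \<le> D y v / prob (A y)"
    proof -
      have "0 \<le> D y v"
        using Dmono[OF y, of v] Dpos[of v] by (cases "v = 0") (auto simp: D_def)
      then have "D y v * prob (A y) \<le> D y v" using P1 by (simp add: mult_left_le)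
      then show ?thesis using P0 by (simp add: le_divide_eq)
    qed
    also have "\<dots> = v \<bullet> (trunc_cov M X N y *v v)" by (rule qD[OF y, symmetric])
    finally show ?thesis .
  qed
  have symcov: "transpose (trunc_cov M X N y) = trunc_cov M X N y" for y
    by (simp add: trunc_cov_def transpose_def vec_eq_iff Let_def mult.commute)
  have bound: "inv_sqrt_opnorm (trunc_cov M X N y) \<le> 1 / sqrt c" if "y \<ge> \<delta>" for y
    by (rule inv_sqrt_bound[OF symcov cpos main[OF that]])
  have Cpos: "0 < 1 / sqrt c" using cpos by simp
  have PA1': "measure M (trunc_event M X N \<delta>) < 1" using PA1 by (simp add: A_def)
  show ?thesis using Cpos \<delta>0 PA1' bound by blast
qed

end
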